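(* Let $T$ be an $i$-subset of $[r]$. Then there exist at least $\lfloor r-\tfrac{5}{2}i\rfloor$ sets $S\subseteq[r]$ with $|S|=i+1$, $T\subseteq S$, such that $S$ dominates $T$.
   Context: For $\pi=a_1\cdots a_{r+1}\in S_{r+1}$, its descent set is $\{j\in[r]:a_j>a_{j+1}\}$, and $D(S)$ is the set of permutations in $S_{r+1}$ with descent set $S$. The inversion set is $I(\pi)=\{(a_j,a_k):j<k,\ a_j>a_k\}$; $\pi\le_w\pi'$ iff $I(\pi)\subseteq I(\pi')$ (weak Bruhat order). $S$ dominates $T$ if there is an injection $\phi:D(T)\to D(S)$ with $\pi\le_w\phi(\pi)$ for all $\pi\in D(T)$. *)

theory Defs
  imports Complex_Main "HOL-Combinatorics.Permutations"
begin

text \<open>A permutation pi = a_1 ... a_(r+1) of S_(r+1) is represented as a bijection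
  pi permuting {1..r+1}, with a_j = pi j.\<close>

definition perms :: "nat \<Rightarrow> (nat \<Rightarrow> nat) set" where
  "perms r = {p. p permutes {1..Suc r}}"

definition descent_set :: "nat \<Rightarrow> (nat \<Rightarrow> nat) \<Rightarrow> nat set" where
  "descent_set r p = {j \<in> {1..r}. p j > p (Suc j)}"

definition Dset :: "nat \<Rightarrow> nat set \<Rightarrow> (nat \<Rightarrow> nat) set" where
  "Dset r S = {p \<in> perms r. descent_set r p = S}"

definition inversions :: "nat \<Rightarrow> (nat \<Rightarrow> nat) \<Rightarrow> (nat \<times> nat) set" where
  "inversions r p = {(p j, p k) | j k. j \<in> {1..Suc r} \<and> k \<in> {1..Suc r} \<and> j < k \<and> p j > p k}"

definition weak_le :: "nat \<Rightarrow> (nat \<Rightarrow> nat) \<Rightarrow> (nat \<Rightarrow> nat) \<Rightarrow> bool" where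
  "weak_le r p q \<longleftrightarrow> inversions r p \<subseteq> inversions r q"

definition dominates :: "nat \<Rightarrow> nat set \<Rightarrow> nat set \<Rightarrow> bool" where
  "dominates r S T \<longleftrightarrow> (\<exists>\<phi>. inj_on \<phi> (Dset r T) \<and> \<phi> ` Dset r T \<subseteq> Dset r S
      \<and> (\<forall>p \<in> Dset r T. weak_le r p (\<phi> p)))"

end

theory Submission
  imports Defs "HOL-Combinatorics.Multiset_Permutations"
begin

definition rk :: "(nat \<Rightarrow> nat) \<Rightarrow> nat \<Rightarrow> nat \<Rightarrow> nat \<Rightarrow> nat" where
  "rk p s w k = card {l \<in> {0..<w}. p (s + l) < p (s + k)}"

definition pat :: "(nat \<Rightarrow> nat) \<Rightarrow> nat \<Rightarrow> nat \<Rightarrow> nat list" where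
  "pat p s w = map (rk p s w) [0..<w]"

lemma rk_less:
  assumes inj: "inj_on p {s..<s+w}" and a: "a < w" and b: "b < w"
  shows "(rk p s w a < rk p s w b) = (p (s+a) < p (s+b))"
proof
  assume "p (s+a) < p (s+b)"
  hence h: "{l \<in> {0..<w}. p (s + l) < p (s + a)} \<subseteq> {l \<in> {0..<w}. p (s + l) < p (s + b)}"
    and h2: "a \<in> {l \<in> {0..<w}. p (s + l) < p (s + b)}"
    using a by auto
  have "a \<notin> {l \<in> {0..<w}. p (s + l) < p (s + a)}" by simp
  hence "{l \<in> {0..<w}. p (s + l) < p (s + a)} \<subset> {l \<in> {0..<w}. p (s + l) < p (s + b)}"
    using h h2 by blast
  thus "rk p s w a < rk p s w b" unfolding rk_def by (intro psubset_card_mono) auto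
next
  assume h: "rk p s w a < rk p s w b"
  show "p (s+a) < p (s+b)"
  proof (rule ccontr)
    assume "\<not> p (s+a) < p (s+b)"
    hence "{l \<in> {0..<w}. p (s + l) < p (s + b)} \<subseteq> {l \<in> {0..<w}. p (s + l) < p (s + a)}"
      by auto
    hence "rk p s w b \<le> rk p s w a" unfolding rk_def by (intro card_mono) auto
    with h show False by simp
  qed
qed

lemma rk_bound:
  assumes a: "a < w"
  shows "rk p s w a < w"
proof -
  have "a \<notin> {l \<in> {0..<w}. p (s + l) < p (s + a)}" by simp
  moreover have "a \<in> {0..<w}" using a by simp
  ultimately have "{l \<in> {0..<w}. p (s + l) < p (s + a)} \<subset> {0..<w}" by blast
  hence "card {l \<in> {0..<w}. p (s + l) < p (s + a)} < card {0..<w}"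
    by (intro psubset_card_mono) auto
  thus ?thesis unfolding rk_def by simp
qed

lemma pat_nth: "k < w \<Longrightarrow> pat p s w ! k = rk p s w k"
  unfolding pat_def by simp

lemma pat_order:
  assumes "inj_on p {s..<s+w}" "a < w" "b < w"
  shows "(pat p s w ! a < pat p s w ! b) = (p (s+a) < p (s+b))"
  using rk_less[OF assms] assms by (simp add: pat_nth)

lemma pat_perm:
  assumes inj: "inj_on p {s..<s+w}"
  shows "pat p s w \<in> permutations_of_set {0..<w}"
proof -
  have d: "distinct (pat p s w)"
  proof (subst distinct_conv_nth, intro allI impI)
    fix a b assume a: "a < length (pat p s w)" and b: "b < length (pat p s w)" and ab: "a \<noteq> b"
    hence a': "a < w" and b': "b < w" by (auto simp: pat_def)
    have "s + a \<noteq> s + b" using ab by simp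
    hence "p (s+a) \<noteq> p (s+b)" using inj a' b' by (auto dest: inj_onD)
    hence "p (s+a) < p (s+b) \<or> p (s+b) < p (s+a)" by auto
    thus "pat p s w ! a \<noteq> pat p s w ! b"
      using pat_order[OF inj a' b'] pat_order[OF inj b' a'] by auto
  qed
  have sub: "set (pat p s w) \<subseteq> {0..<w}" using rk_bound by (auto simp: pat_def)
  have "card (set (pat p s w)) = w" using distinct_card[OF d] by (simp add: pat_def)
  hence "set (pat p s w) = {0..<w}" using sub by (intro card_subset_eq) auto
  with d show ?thesis by auto
qed

lemma length_pat[simp]: "length (pat p s w) = w" by (simp add: pat_def)


definition isperm :: "nat \<Rightarrow> nat list \<Rightarrow> bool" where
  "isperm w g \<longleftrightarrow> length g = w \<and> distinct g \<and> list_all (\<lambda>x. x < w) g"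

lemma isperm_set:
  assumes "isperm w g" shows "set g = {0..<w}"
proof -
  have d: "distinct g" and l: "length g = w" and sub: "set g \<subseteq> {0..<w}"
    using assms by (auto simp: isperm_def list_all_iff)
  have "card (set g) = w" using distinct_card[OF d] l by simp
  thus ?thesis using sub by (intro card_subset_eq) auto
qed

definition sig :: "nat \<Rightarrow> nat \<Rightarrow> nat list \<Rightarrow> nat \<Rightarrow> nat" where
  "sig s w g x = (if s \<le> x \<and> x < s + w then s + g ! (x - s) else x)"

lemma sig_permutes:
  assumes ip: "isperm w g"
  shows "sig s w g permutes {s..<s+w}"
proof (rule bij_imp_permutes)
  have d: "distinct g" and l: "length g = w" using ip by (auto simp: isperm_def)
  have sg: "set g = {0..<w}" using isperm_set[OF ip] .
  have inj: "inj_on (sig s w g) {s..<s+w}"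
  proof (rule inj_onI)
    fix x y assume x: "x \<in> {s..<s+w}" and y: "y \<in> {s..<s+w}" and e: "sig s w g x = sig s w g y"
    hence "g ! (x - s) = g ! (y - s)" by (auto simp: sig_def)
    moreover have "x - s < length g" "y - s < length g" using l x y by auto
    ultimately have "x - s = y - s" using nth_eq_iff_index_eq[OF d] by blast
    thus "x = y" using x y by auto
  qed
  have im: "sig s w g ` {s..<s+w} \<subseteq> {s..<s+w}"
  proof
    fix y assume "y \<in> sig s w g ` {s..<s+w}"
    then obtain x where x: "x \<in> {s..<s+w}" and y: "y = sig s w g x" by auto
    have "x - s < length g" using x l by auto
    hence "g ! (x - s) \<in> set g" by (rule nth_mem)
    hence "g ! (x - s) < w" using sg by auto
    thus "y \<in> {s..<s+w}" using x y by (auto simp: sig_def)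
  qed
  have "sig s w g ` {s..<s+w} = {s..<s+w}" using endo_inj_surj[OF _ im inj] by simp
  thus "bij_betw (sig s w g) {s..<s+w} {s..<s+w}" using inj by (simp add: bij_betw_def)
next
  fix x assume "x \<notin> {s..<s+w}" thus "sig s w g x = x" by (auto simp: sig_def)
qed

definition descw :: "nat list \<Rightarrow> bool list" where
  "descw P = map (\<lambda>k. P ! (Suc k) < P ! k) [0..<length P - 1]"

definition Hmap :: "nat list \<Rightarrow> nat list \<Rightarrow> nat list" where
  "Hmap P g = map (\<lambda>k. P ! (g ! k)) [0..<length P]"

definition wgood :: "nat list \<Rightarrow> nat list \<Rightarrow> bool list \<Rightarrow> bool" where
  "wgood P g dS \<longleftrightarrow> isperm (length P) g \<and> descw (Hmap P g) = dS \<and> P ! 0 \<le> P ! (g ! 0)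
     \<and> P ! (g ! (length P - 1)) \<le> P ! (length P - 1)
     \<and> list_all (\<lambda>k. list_all (\<lambda>l. k < l \<longrightarrow> P ! (g ! k) < P ! (g ! l) \<longrightarrow> g ! k < g ! l)
          [0..<length P]) [0..<length P]"

locale win =
  fixes r s w :: nat and T S :: "nat set" and G :: "nat list \<Rightarrow> nat list" and dT dS :: "bool list"
  assumes s1: "1 \<le> s" and sw: "s + w \<le> Suc (Suc r)" and w2: "2 \<le> w"
   and TS: "T \<subseteq> {1..r}" and SS: "S \<subseteq> {1..r}" and ldT: "length dT = w - 1"
   and dTk: "\<And>k. k < w - 1 \<Longrightarrow> (s + k \<in> T \<longleftrightarrow> dT ! k)"
   and dSk: "\<And>k. k < w - 1 \<Longrightarrow> (s + k \<in> S \<longleftrightarrow> dS ! k)"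
   and outs: "\<And>x. \<not> (s \<le> x \<and> x < s + w - 1) \<Longrightarrow> (x \<in> T \<longleftrightarrow> x \<in> S)"
   and left: "s - 1 \<notin> T" and right: "s + w - 1 \<notin> T"
   and chk: "\<And>P. P \<in> permutations_of_set {0..<w} \<Longrightarrow> descw P = dT \<Longrightarrow> wgood P (G P) dS"
   and injc: "\<And>P1 P2. P1 \<in> permutations_of_set {0..<w} \<Longrightarrow> descw P1 = dT \<Longrightarrow>
        P2 \<in> permutations_of_set {0..<w} \<Longrightarrow> descw P2 = dT \<Longrightarrow>
        (\<And>a b. a < w \<Longrightarrow> b < w \<Longrightarrow> (Hmap P1 (G P1) ! a < Hmap P1 (G P1) ! b) = (Hmap P2 (G P2) ! a < Hmap P2 (G P2) ! b))
        \<Longrightarrow> P1 = P2"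
begin

definition phi :: "(nat \<Rightarrow> nat) \<Rightarrow> nat \<Rightarrow> nat" where
  "phi p = p \<circ> sig s w (G (pat p s w))"

lemma basic:
  assumes p: "p \<in> Dset r T"
  shows "pat p s w \<in> permutations_of_set {0..<w}" "descw (pat p s w) = dT"
    "wgood (pat p s w) (G (pat p s w)) dS" "isperm w (G (pat p s w))"
    "p permutes {1..Suc r}" "inj_on p {s..<s+w}"
proof -
  have pp: "p permutes {1..Suc r}" and ds: "descent_set r p = T"
    using p by (auto simp: Dset_def perms_def)
  show "p permutes {1..Suc r}" by fact
  have inj: "inj_on p {s..<s+w}" using inj_on_subset[OF permutes_inj[OF pp] subset_UNIV] .
  show "inj_on p {s..<s+w}" by fact
  show P: "pat p s w \<in> permutations_of_set {0..<w}" using pat_perm[OF inj] .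
  show D: "descw (pat p s w) = dT"
  proof (rule nth_equalityI)
    show "length (descw (pat p s w)) = length dT" using ldT by (simp add: descw_def)
    fix k assume "k < length (descw (pat p s w))"
    hence k: "k < w - 1" by (simp add: descw_def)
    have "descw (pat p s w) ! k = (pat p s w ! Suc k < pat p s w ! k)"
      using k by (simp add: descw_def)
    also have "\<dots> = (p (s + Suc k) < p (s + k))" using k by (intro pat_order[OF inj]) auto
    also have "\<dots> = (s + k \<in> descent_set r p)"
    proof -
      have "s + k \<in> {1..r}" using k s1 sw by simp
      thus ?thesis by (simp add: descent_set_def)
    qed
    also have "\<dots> = dT ! k" using ds dTk[OF k] by simp
    finally show "descw (pat p s w) ! k = dT ! k" .
  qed
  show W: "wgood (pat p s w) (G (pat p s w)) dS" using chk[OF P D] .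
  thus "isperm w (G (pat p s w))" unfolding wgood_def by simp
qed

lemma phi_win:
  assumes p: "p \<in> Dset r T" and k: "k < w"
  shows "phi p (s + k) = p (s + G (pat p s w) ! k)"
  using k by (simp add: phi_def sig_def)

lemma phi_out:
  assumes "\<not> (s \<le> x \<and> x < s + w)"
  shows "phi p x = p x"
  using assms by (auto simp: phi_def sig_def)

lemma sig_sub:
  assumes "isperm w g" shows "sig s w g permutes {1..Suc r}"
proof (rule permutes_subset[OF sig_permutes[OF assms]])
  show "{s..<s+w} \<subseteq> {1..Suc r}" using s1 sw by auto
qed

lemma phi_perm:
  assumes p: "p \<in> Dset r T"
  shows "phi p permutes {1..Suc r}"
  unfolding phi_def
  using permutes_compose[OF sig_sub[OF basic(4)[OF p]] basic(5)[OF p]] .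

lemma phi_order:
  assumes p: "p \<in> Dset r T" and a: "a < w" and b: "b < w"
  shows "(phi p (s+a) < phi p (s+b)) = (Hmap (pat p s w) (G (pat p s w)) ! a < Hmap (pat p s w) (G (pat p s w)) ! b)"
proof -
  let ?g = "G (pat p s w)"
  have ip: "isperm w ?g" using basic(4)[OF p] .
  have lg: "length ?g = w" using ip by (simp add: isperm_def)
  have "?g ! a \<in> set ?g" using a lg by (intro nth_mem) simp
  hence ga: "?g ! a < w" using isperm_set[OF ip] by simp
  have "?g ! b \<in> set ?g" using b lg by (intro nth_mem) simp
  hence gb: "?g ! b < w" using isperm_set[OF ip] by simp
  show ?thesis
    using a b phi_win[OF p a] phi_win[OF p b] pat_order[OF basic(6)[OF p] ga gb]
    by (simp add: Hmap_def)
qed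


lemma g_lt:
  assumes p: "p \<in> Dset r T" and k: "k < w"
  shows "G (pat p s w) ! k < w"
proof -
  have ip: "isperm w (G (pat p s w))" using basic(4)[OF p] .
  hence "G (pat p s w) ! k \<in> set (G (pat p s w))" using k by (auto simp: isperm_def)
  thus ?thesis using isperm_set[OF ip] by auto
qed

lemma phi_desc:
  assumes p: "p \<in> Dset r T"
  shows "descent_set r (phi p) = S"
proof -
  let ?P = "pat p s w"
  let ?g = "G ?P"
  have W: "wgood ?P ?g dS" using basic(3)[OF p] .
  have inj: "inj_on p {s..<s+w}" using basic(6)[OF p] .
  have ds: "descent_set r p = T" using p by (auto simp: Dset_def)
  have dsp: "\<And>x. x \<in> {1..r} \<Longrightarrow> (x \<in> T \<longleftrightarrow> p (Suc x) < p x)"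
    using ds by (auto simp: descent_set_def)
  show ?thesis
  proof (rule set_eqI)
    fix x
    show "x \<in> descent_set r (phi p) \<longleftrightarrow> x \<in> S"
    proof (cases "x \<in> {1..r}")
      case False thus ?thesis using SS by (auto simp: descent_set_def)
    next
      case xr: True
      have "x \<in> descent_set r (phi p) \<longleftrightarrow> phi p (Suc x) < phi p x" using xr by (simp add: descent_set_def)
      also have "\<dots> \<longleftrightarrow> x \<in> S"
      proof -
        consider (inw) "s \<le> x \<and> x < s + w - 1" | (lft) "Suc x = s" | (rgt) "x = s + w - 1"
          | (oth) "Suc x < s \<or> x > s + w - 1" by linarith
        thus ?thesis
        proof cases
          case inw
          define k where "k = x - s"
          have k: "k < w - 1" and xk: "x = s + k" using inw by (auto simp: k_def)
          have "phi p (Suc x) < phi p x \<longleftrightarrow> Hmap ?P ?g ! Suc k < Hmap ?P ?g ! k"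
            using phi_order[OF p, of "Suc k" k] k xk by simp
          also have "\<dots> \<longleftrightarrow> descw (Hmap ?P ?g) ! k" using k by (simp add: descw_def Hmap_def)
          also have "\<dots> \<longleftrightarrow> dS ! k" using W by (simp add: wgood_def)
          also have "\<dots> \<longleftrightarrow> x \<in> S" using dSk[OF k] xk by simp
          finally show ?thesis .
        next
          case lft
          have xT: "x \<notin> T" using left lft by auto
          have xS: "x \<notin> S" using outs[of x] xT lft by auto
          have e1: "phi p x = p x" using lft by (intro phi_out) auto
          have e2: "phi p (Suc x) = p (s + ?g ! 0)" using phi_win[OF p, of 0] w2 lft by simp
          have g0: "?g ! 0 < w" using g_lt[OF p, of 0] w2 by simp
          have "\<not> ?P ! (?g ! 0) < ?P ! 0" using W by (simp add: wgood_def)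
          hence "\<not> p (s + ?g ! 0) < p (s + 0)" using pat_order[OF inj g0, of 0] w2 by simp
          moreover have "\<not> p s < p x" using dsp[OF xr] xT lft by simp
          ultimately show ?thesis using e1 e2 xS by simp
        next
          case rgt
          have xT: "x \<notin> T" using right rgt by auto
          have xS: "x \<notin> S" using outs[of x] xT rgt w2 by auto
          have e1: "phi p x = p (s + ?g ! (w - 1))" using phi_win[OF p, of "w - 1"] w2 rgt by simp
          have e2: "phi p (Suc x) = p (Suc x)" using rgt w2 by (intro phi_out) auto
          have g0: "?g ! (w - 1) < w" using g_lt[OF p, of "w - 1"] w2 by simp
          have "\<not> ?P ! (w - 1) < ?P ! (?g ! (w - 1))" using W by (simp add: wgood_def)
          hence "\<not> p (s + (w - 1)) < p (s + ?g ! (w - 1))" using pat_order[OF inj _ g0, of "w - 1"] w2 by simp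
          moreover have "\<not> p (Suc x) < p x" using dsp[OF xr] xT by simp
          ultimately show ?thesis using e1 e2 xS rgt w2 by auto
        next
          case oth
          have e1: "phi p x = p x" using oth by (intro phi_out) auto
          have e2: "phi p (Suc x) = p (Suc x)" using oth by (intro phi_out) auto
          have "x \<in> S \<longleftrightarrow> x \<in> T" using outs[of x] oth by auto
          thus ?thesis using e1 e2 dsp[OF xr] by simp
        qed
      qed
      finally show ?thesis .
    qed
  qed
qed

lemma phi_inv:
  assumes p: "p \<in> Dset r T"
  shows "phi p (inv (sig s w (G (pat p s w))) x) = p x"
  using permutes_inverses(1)[OF sig_permutes[OF basic(4)[OF p]]] by (simp add: phi_def)

lemma phi_weak:
  assumes p: "p \<in> Dset r T"
  shows "weak_le r p (phi p)"
proof -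
  let ?P = "pat p s w"
  let ?g = "G ?P"
  let ?\<sigma> = "sig s w ?g"
  have W: "wgood ?P ?g dS" using basic(3)[OF p] .
  have inj: "inj_on p {s..<s+w}" using basic(6)[OF p] .
  have sp: "?\<sigma> permutes {s..<s+w}" using sig_permutes[OF basic(4)[OF p]] .
  have spi: "inv ?\<sigma> permutes {s..<s+w}" using permutes_inv[OF sp] .
  have inv_win: "\<And>x. x \<in> {s..<s+w} \<Longrightarrow> inv ?\<sigma> x \<in> {s..<s+w}"
    using permutes_in_image[OF spi] by blast
  have inv_out: "\<And>x. x \<notin> {s..<s+w} \<Longrightarrow> inv ?\<sigma> x = x"
    using permutes_not_in[OF spi] by blast
  have sinv: "\<And>x. ?\<sigma> (inv ?\<sigma> x) = x" using permutes_inverses(1)[OF sp] .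
  have inv_range: "\<And>x. x \<in> {1..Suc r} \<Longrightarrow> inv ?\<sigma> x \<in> {1..Suc r}"
  proof -
    fix x assume x: "x \<in> {1..Suc r}"
    show "inv ?\<sigma> x \<in> {1..Suc r}"
    proof (cases "x \<in> {s..<s+w}")
      case True thus ?thesis using inv_win[OF True] s1 sw by auto
    next
      case False thus ?thesis using inv_out[OF False] x by simp
    qed
  qed
  have gidx: "\<And>x. x \<in> {s..<s+w} \<Longrightarrow> ?g ! (inv ?\<sigma> x - s) = x - s"
  proof -
    fix x assume x: "x \<in> {s..<s+w}"
    have "?\<sigma> (inv ?\<sigma> x) = x" using sinv .
    thus "?g ! (inv ?\<sigma> x - s) = x - s" using inv_win[OF x] by (auto simp: sig_def)
  qed
  have WL: "\<And>k l. k < w \<Longrightarrow> l < w \<Longrightarrow> k < l \<Longrightarrow> ?P ! (?g ! k) < ?P ! (?g ! l) \<Longrightarrow> ?g ! k < ?g ! l"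
    using W by (auto simp: wgood_def list_all_iff)
  show ?thesis unfolding weak_le_def inversions_def
  proof (intro subsetI)
    fix z assume "z \<in> {(p j, p k) |j k. j \<in> {1..Suc r} \<and> k \<in> {1..Suc r} \<and> j < k \<and> p k < p j}"
    then obtain j k where z: "z = (p j, p k)" and j: "j \<in> {1..Suc r}" and k: "k \<in> {1..Suc r}"
      and jk: "j < k" and pjk: "p k < p j" by blast
    have lt: "inv ?\<sigma> j < inv ?\<sigma> k"
    proof (cases "j \<in> {s..<s+w}")
      case jw: True
      show ?thesis
      proof (cases "k \<in> {s..<s+w}")
        case kw: True
        define a where "a = inv ?\<sigma> j - s"
        define b where "b = inv ?\<sigma> k - s"
        have aw: "a < w" and ja: "inv ?\<sigma> j = s + a" using inv_win[OF jw] by (auto simp: a_def)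
        have bw: "b < w" and kb: "inv ?\<sigma> k = s + b" using inv_win[OF kw] by (auto simp: b_def)
        have ga: "?g ! a = j - s" using gidx[OF jw] by (simp add: a_def)
        have gb: "?g ! b = k - s" using gidx[OF kw] by (simp add: b_def)
        show ?thesis
        proof (rule ccontr)
          assume "\<not> inv ?\<sigma> j < inv ?\<sigma> k"
          hence "b \<le> a" using ja kb by simp
          moreover have "a \<noteq> b" using ga gb jk jw kw by auto
          ultimately have ba: "b < a" by simp
          have kw': "k - s < w" and jw': "j - s < w" using jw kw by auto
          have "?P ! (k - s) < ?P ! (j - s)"
            using pat_order[OF inj kw' jw'] pjk jw kw by simp
          hence "?g ! b < ?g ! a" using WL[OF bw aw ba] ga gb by simp
          thus False using ga gb jk jw kw by simp
        qed
      next
        case kw: False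
        hence "k \<ge> s + w" using jw jk by auto
        thus ?thesis using inv_win[OF jw] inv_out[OF kw] by auto
      qed
    next
      case jw: False
      show ?thesis
      proof (cases "k \<in> {s..<s+w}")
        case kw: True
        hence "j < s" using jw jk by auto
        thus ?thesis using inv_win[OF kw] inv_out[OF jw] by auto
      next
        case kw: False
        thus ?thesis using inv_out[OF jw] inv_out[OF kw] jk by simp
      qed
    qed
    have "z = (phi p (inv ?\<sigma> j), phi p (inv ?\<sigma> k))" using z phi_inv[OF p] by simp
    moreover have "phi p (inv ?\<sigma> k) < phi p (inv ?\<sigma> j)" using pjk phi_inv[OF p] by simp
    ultimately show "z \<in> {(phi p j, phi p k) |j k. j \<in> {1..Suc r} \<and> k \<in> {1..Suc r} \<and> j < k \<and> phi p k < phi p j}"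
      using inv_range[OF j] inv_range[OF k] lt by blast
  qed
qed

lemma phi_inj: "inj_on phi (Dset r T)"
proof (rule inj_onI)
  fix p1 p2 assume p1: "p1 \<in> Dset r T" and p2: "p2 \<in> Dset r T" and e: "phi p1 = phi p2"
  have PP: "pat p1 s w = pat p2 s w"
  proof (rule injc[OF basic(1)[OF p1] basic(2)[OF p1] basic(1)[OF p2] basic(2)[OF p2]])
    fix a b assume a: "a < w" and b: "b < w"
    show "(Hmap (pat p1 s w) (G (pat p1 s w)) ! a < Hmap (pat p1 s w) (G (pat p1 s w)) ! b) =
          (Hmap (pat p2 s w) (G (pat p2 s w)) ! a < Hmap (pat p2 s w) (G (pat p2 s w)) ! b)"
      using phi_order[OF p1 a b] phi_order[OF p2 a b] e by simp
  qed
  show "p1 = p2"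
  proof
    fix x
    have "p1 x = phi p1 (inv (sig s w (G (pat p1 s w))) x)" using phi_inv[OF p1] by simp
    also have "\<dots> = phi p2 (inv (sig s w (G (pat p2 s w))) x)" using e PP by simp
    also have "\<dots> = p2 x" using phi_inv[OF p2] by simp
    finally show "p1 x = p2 x" .
  qed
qed

theorem dom: "dominates r S T"
  unfolding dominates_def
proof (intro exI[of _ phi] conjI ballI)
  show "inj_on phi (Dset r T)" using phi_inj .
  show "phi ` Dset r T \<subseteq> Dset r S"
    using phi_perm phi_desc by (auto simp: Dset_def perms_def)
  fix p assume "p \<in> Dset r T" thus "weak_le r p (phi p)" using phi_weak by blast
qed

end



definition gA :: "nat set \<Rightarrow> nat \<Rightarrow> bool" where
  "gA T j \<longleftrightarrow> j - 1 \<notin> T \<and> Suc j \<notin> T"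
definition gB :: "nat \<Rightarrow> nat set \<Rightarrow> nat \<Rightarrow> bool" where
  "gB r T j \<longleftrightarrow> j - 1 \<in> T \<and> j - 2 \<notin> T \<and> Suc j \<notin> T \<and> j + 2 \<notin> T \<and> j < r"
definition gC :: "nat set \<Rightarrow> nat \<Rightarrow> bool" where
  "gC T j \<longleftrightarrow> j - 1 \<in> T \<and> j + 2 \<in> T \<and> Suc j \<notin> T \<and> j - 2 \<notin> T \<and> j - 3 \<notin> T \<and> j + 3 \<notin> T \<and> 3 \<le> j"

definition Good :: "nat \<Rightarrow> nat set \<Rightarrow> nat set" where
  "Good r T = {j \<in> {1..r}. j \<notin> T \<and> (gA T j \<or> gB r T j \<or> gC T j)}"

lemma count_good:
  assumes TS: "T \<subseteq> {1..r}"
  shows "2 * r \<le> 2 * card (Good r T) + 1 + 5 * card T"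
proof -
  define Bad where "Bad = {j \<in> {1..r}. j \<notin> T \<and> \<not> (gA T j \<or> gB r T j \<or> gC T j)}"
  have fT: "finite T" using TS finite_subset by blast
  have GB: "Good r T \<union> Bad = {1..r} - T" and GBd: "Good r T \<inter> Bad = {}"
    by (auto simp: Good_def Bad_def)
  have fG: "finite (Good r T)" and fB: "finite Bad" by (auto simp: Good_def Bad_def)
  have cT: "card T \<le> r" using card_mono[OF _ TS] by simp
  have "card (Good r T) + card Bad = card ({1..r} - T)"
    using card_Un_disjoint[OF fG fB GBd] GB by simp
  also have "\<dots> = r - card T" using TS by (simp add: card_Diff_subset fT)
  finally have eq1: "card (Good r T) + card Bad = r - card T" .
  define B1 where "B1 = {j \<in> Bad. Suc j \<in> T}"
  define B2 where "B2 = {j \<in> Bad. Suc j \<notin> T}"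
  have fB1: "finite B1" and fB2: "finite B2" using fB by (auto simp: B1_def B2_def)
  have "card Bad = card B1 + card B2"
  proof -
    have "Bad = B1 \<union> B2" and "B1 \<inter> B2 = {}" by (auto simp: B1_def B2_def)
    thus ?thesis using card_Un_disjoint[OF fB1 fB2] by simp
  qed
  define X where "X = Suc ` B1"
  define Y where "Y = (\<lambda>j. j - 1) ` B2"
  have cX: "card X = card B1" unfolding X_def by (rule card_image) simp
  have cY: "card Y = card B2" unfolding Y_def
  proof (rule card_image)
    show "inj_on (\<lambda>j. j - 1) B2"
      by (rule inj_onI) (auto simp: B2_def Bad_def)
  qed
  have XT: "X \<subseteq> T" by (auto simp: X_def B1_def)
  have YT: "Y \<subseteq> T" by (auto simp: Y_def B2_def Bad_def gA_def)
  have fX: "finite X" and fY: "finite Y" using XT YT fT finite_subset by auto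
  have Yprop: "\<And>y. y \<in> Y \<Longrightarrow> Suc y \<notin> T \<and> y + 2 \<notin> T"
    by (auto simp: Y_def B2_def Bad_def)
  have XYprop: "\<And>t. t \<in> X \<inter> Y \<Longrightarrow> t \<in> T \<and> t - 1 \<notin> T \<and> 2 \<le> t \<and> Suc t \<notin> T \<and> t + 2 \<notin> T
      \<and> Suc t \<le> r \<and> (Suc t = r \<or> (t + 3 \<in> T \<and> (t - 2 \<in> T \<or> t + 4 \<in> T)))"
  proof -
    fix t assume t: "t \<in> X \<inter> Y"
    then obtain j1 where j1: "j1 \<in> B1" "t = Suc j1" by (auto simp: X_def)
    obtain j2 where j2: "j2 \<in> B2" "t = j2 - 1" using t by (auto simp: Y_def)
    have "1 \<le> j2" using j2(1) by (auto simp: B2_def Bad_def)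
    hence j2t: "j2 = Suc t" using j2(2) by simp
    have tT: "t \<in> T" using j1 by (auto simp: B1_def)
    have t1: "t - 1 \<notin> T" "2 \<le> t" using j1 by (auto simp: B1_def Bad_def)
    have st: "Suc t \<in> B2" using j2(1) j2t by simp
    have b2: "Suc t \<in> {1..r}" "Suc t \<notin> T" "t + 2 \<notin> T" "\<not> gB r T (Suc t)" "\<not> gC T (Suc t)"
      using st by (auto simp: B2_def Bad_def)
    have "Suc t = r \<or> t + 3 \<in> T"
      using b2 tT t1 by (auto simp: gB_def numeral_eq_Suc)
    moreover have "t + 3 \<in> T \<longrightarrow> (t - 2 \<in> T \<or> t + 4 \<in> T)"
      using b2 tT t1 by (auto simp: gC_def numeral_eq_Suc)
    ultimately show "t \<in> T \<and> t - 1 \<notin> T \<and> 2 \<le> t \<and> Suc t \<notin> T \<and> t + 2 \<notin> T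
      \<and> Suc t \<le> r \<and> (Suc t = r \<or> (t + 3 \<in> T \<and> (t - 2 \<in> T \<or> t + 4 \<in> T)))"
      using tT t1 b2 by auto
  qed
  define f where "f t = (if t + 4 \<in> T then t + 3 else t - 2)" for t
  have finj: "inj_on f (X \<inter> Y - {r - 1})"
  proof (rule inj_onI)
    fix a b assume a: "a \<in> X \<inter> Y - {r - 1}" and b: "b \<in> X \<inter> Y - {r - 1}" and e: "f a = f b"
    have pa: "a + 3 \<in> T \<and> (a - 2 \<in> T \<or> a + 4 \<in> T)" "a - 1 \<notin> T" "2 \<le> a"
      using XYprop[of a] a by auto
    have pb: "b + 3 \<in> T \<and> (b - 2 \<in> T \<or> b + 4 \<in> T)" "b - 1 \<notin> T" "2 \<le> b"
      using XYprop[of b] b by auto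
    show "a = b"
    proof (cases "a + 4 \<in> T")
      case True
      show ?thesis
      proof (cases "b + 4 \<in> T")
        case True thus ?thesis using \<open>a + 4 \<in> T\<close> e by (simp add: f_def)
      next
        case False
        hence "a + 3 = b - 2" using \<open>a + 4 \<in> T\<close> e by (simp add: f_def)
        hence "b - 1 = a + 4" using pb by simp
        thus ?thesis using pb(2) \<open>a + 4 \<in> T\<close> by simp
      qed
    next
      case False
      show ?thesis
      proof (cases "b + 4 \<in> T")
        case True
        hence "b + 3 = a - 2" using \<open>a + 4 \<notin> T\<close> e by (simp add: f_def)
        hence "a - 1 = b + 4" using pa by simp
        thus ?thesis using pa(2) \<open>b + 4 \<in> T\<close> by simp
      next
        case False thus ?thesis using \<open>a + 4 \<notin> T\<close> e pa pb by (simp add: f_def)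
      qed
    qed
  qed
  have fimg: "f ` (X \<inter> Y - {r - 1}) \<subseteq> T - Y"
  proof
    fix z assume "z \<in> f ` (X \<inter> Y - {r - 1})"
    then obtain t where t: "t \<in> X \<inter> Y - {r - 1}" and z: "z = f t" by auto
    have pt: "t \<in> T" "t + 3 \<in> T \<and> (t - 2 \<in> T \<or> t + 4 \<in> T)" "2 \<le> t"
      using XYprop[of t] t by auto
    show "z \<in> T - Y"
    proof (cases "t + 4 \<in> T")
      case True
      hence "z = t + 3" by (simp add: z f_def)
      moreover have "t + 3 \<notin> Y"
      proof
        assume "t + 3 \<in> Y"
        hence "Suc (t + 3) \<notin> T" using Yprop by blast
        thus False using True by (simp add: add.commute)
      qed
      ultimately show ?thesis using pt by simp
    next
      case False
      hence "z = t - 2" by (simp add: z f_def)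
      moreover have "t - 2 \<notin> Y"
      proof
        assume "t - 2 \<in> Y"
        hence h: "t - 2 + 2 \<notin> T" using Yprop by blast
        have "t - 2 + 2 = t" using pt(3) by simp
        thus False using h pt(1) by metis
      qed
      moreover have "t - 2 \<in> T" using pt False by auto
      ultimately show ?thesis by simp
    qed
  qed
  have "card (X \<inter> Y - {r - 1}) \<le> card (T - Y)"
    using card_inj_on_le[OF finj fimg] fT by simp
  also have "\<dots> = card T - card Y" using YT fY by (simp add: card_Diff_subset)
  finally have c1: "card (X \<inter> Y - {r - 1}) \<le> card T - card Y" .
  have "card (X \<inter> Y) \<le> card (insert (r - 1) (X \<inter> Y - {r - 1}))"
    using fX by (intro card_mono) auto
  also have "\<dots> = Suc (card (X \<inter> Y - {r - 1}))"
    using fX by (subst card_insert_if) auto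
  finally have c2: "card (X \<inter> Y) \<le> card T - card Y + 1" using c1 by simp
  have c3: "card (X \<inter> Y) \<le> card Y" using fY by (intro card_mono) auto
  have cYT: "card Y \<le> card T" using card_mono[OF fT YT] .
  have c4: "2 * card (X \<inter> Y) \<le> card T + 1" using c2 c3 cYT by linarith
  have "card X + card Y = card (X \<union> Y) + card (X \<inter> Y)" using card_Un_Int[OF fX fY] .
  moreover have "card (X \<union> Y) \<le> card T" using XT YT fT by (intro card_mono) auto
  ultimately have "card Bad \<le> card T + card (X \<inter> Y)"
    using \<open>card Bad = card B1 + card B2\<close> cX cY by linarith
  thus ?thesis using eq1 c4 cT by linarith
qed



definition Gof :: "(nat list \<times> nat list) list \<Rightarrow> nat list \<Rightarrow> nat list" where
  "Gof tb P = (case map_of tb P of Some g \<Rightarrow> g | None \<Rightarrow> [])"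

definition chk_all :: "nat \<Rightarrow> (nat list \<times> nat list) list \<Rightarrow> bool list \<Rightarrow> bool list \<Rightarrow> bool" where
  "chk_all w tb dT dS \<longleftrightarrow> list_all (\<lambda>P. descw P = dT \<longrightarrow> wgood P (Gof tb P) dS) (permutations_of_set_list [0..<w])"

definition inj_all :: "nat \<Rightarrow> (nat list \<times> nat list) list \<Rightarrow> bool list \<Rightarrow> bool" where
  "inj_all w tb dT \<longleftrightarrow> (let HL = map (\<lambda>P. Hmap P (Gof tb P))
      (filter (\<lambda>P. descw P = dT) (permutations_of_set_list [0..<w])) in
     distinct HL \<and> list_all (isperm w) HL)"

lemma isperm_rank:
  assumes ip: "isperm w H" and a: "a < w"
  shows "H ! a = card {b \<in> {0..<w}. H ! b < H ! a}"
proof -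
  have d: "distinct H" and l: "length H = w" using ip by (auto simp: isperm_def)
  have sH: "set H = {0..<w}" using isperm_set[OF ip] .
  have inj: "inj_on (nth H) {b \<in> {0..<w}. H ! b < H ! a}"
    using d l by (intro inj_on_nth) auto
  have "nth H ` {b \<in> {0..<w}. H ! b < H ! a} = {v \<in> set H. v < H ! a}"
  proof
    show "nth H ` {b \<in> {0..<w}. H ! b < H ! a} \<subseteq> {v \<in> set H. v < H ! a}"
      using l by auto
    show "{v \<in> set H. v < H ! a} \<subseteq> nth H ` {b \<in> {0..<w}. H ! b < H ! a}"
    proof
      fix v assume "v \<in> {v \<in> set H. v < H ! a}"
      then obtain b where b: "b < length H" "H ! b = v" "v < H ! a" by (auto simp: in_set_conv_nth)
      thus "v \<in> nth H ` {b \<in> {0..<w}. H ! b < H ! a}" using l by force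
    qed
  qed
  also have "\<dots> = {0..<H ! a}"
  proof -
    have "H ! a \<in> set H" using a l by (intro nth_mem) simp
    hence "H ! a < w" using sH by simp
    thus ?thesis using sH by auto
  qed
  finally have "card {b \<in> {0..<w}. H ! b < H ! a} = card {0..<H ! a}"
    using card_image[OF inj] by simp
  thus ?thesis by simp
qed

lemma isperm_order_eq:
  assumes i1: "isperm w H1" and i2: "isperm w H2"
    and o: "\<And>a b. a < w \<Longrightarrow> b < w \<Longrightarrow> (H1 ! a < H1 ! b) = (H2 ! a < H2 ! b)"
  shows "H1 = H2"
proof (rule nth_equalityI)
  show "length H1 = length H2" using i1 i2 by (simp add: isperm_def)
  fix a assume "a < length H1"
  hence a: "a < w" using i1 by (simp add: isperm_def)
  have "{b \<in> {0..<w}. H1 ! b < H1 ! a} = {b \<in> {0..<w}. H2 ! b < H2 ! a}"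
    using o a by auto
  thus "H1 ! a = H2 ! a" using isperm_rank[OF i1 a] isperm_rank[OF i2 a] by simp
qed

lemma perms_list: "permutations_of_set {0..<n} = set (permutations_of_set_list [0..<n])"
  using permutations_of_list[of "[0..<n]"] by simp

lemma win_dom_checked:
  assumes a1: "1 \<le> s" and a2: "s + w \<le> Suc (Suc r)" and a3: "2 \<le> w" and a4: "T \<subseteq> {1..r}"
    and a5: "S \<subseteq> {1..r}" and a6: "length dT = w - 1"
    and a7: "\<And>k. k < w - 1 \<Longrightarrow> (s + k \<in> T \<longleftrightarrow> dT ! k)"
    and a8: "\<And>k. k < w - 1 \<Longrightarrow> (s + k \<in> S \<longleftrightarrow> dS ! k)"
    and a9: "\<And>x. \<not> (s \<le> x \<and> x < s + w - 1) \<Longrightarrow> (x \<in> T \<longleftrightarrow> x \<in> S)"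
    and a10: "s - 1 \<notin> T" and a11: "s + w - 1 \<notin> T"
    and c1: "chk_all w tb dT dS" and c2: "inj_all w tb dT"
  shows "dominates r S T"
proof (rule win.dom)
  show "win r s w T S (Gof tb) dT dS"
  proof (unfold_locales)
    fix P assume P: "P \<in> permutations_of_set {0..<w}" and D: "descw P = dT"
    show "wgood P (Gof tb P) dS" using c1 P D by (auto simp: chk_all_def list_all_iff perms_list)
  next
    fix P1 P2 assume P1: "P1 \<in> permutations_of_set {0..<w}" and D1: "descw P1 = dT"
      and P2: "P2 \<in> permutations_of_set {0..<w}" and D2: "descw P2 = dT"
      and ord: "\<And>a b. a < w \<Longrightarrow> b < w \<Longrightarrow> (Hmap P1 (Gof tb P1) ! a < Hmap P1 (Gof tb P1) ! b) =
        (Hmap P2 (Gof tb P2) ! a < Hmap P2 (Gof tb P2) ! b)"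
    have L1: "P1 \<in> set (filter (\<lambda>P. descw P = dT) (permutations_of_set_list [0..<w]))"
      using P1 D1 by (simp add: perms_list)
    have L2: "P2 \<in> set (filter (\<lambda>P. descw P = dT) (permutations_of_set_list [0..<w]))"
      using P2 D2 by (simp add: perms_list)
    define f where "f P = Hmap P (Gof tb P)" for P
    have dd: "distinct (map f (filter (\<lambda>P. descw P = dT) (permutations_of_set_list [0..<w])))"
      and ips: "\<And>P. P \<in> set (filter (\<lambda>P. descw P = dT) (permutations_of_set_list [0..<w])) \<Longrightarrow> isperm w (f P)"
      using c2 unfolding inj_all_def Let_def f_def by (auto simp: list_all_iff)
    have "f P1 = f P2"
      by (rule isperm_order_eq[OF ips[OF L1] ips[OF L2]]) (use ord in \<open>simp add: f_def\<close>)
    thus "P1 = P2" using dd L1 L2 by (auto simp: distinct_map dest: inj_onD)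
  qed (use a1 a2 a3 a4 a5 a6 a7 a8 a9 a10 a11 in auto)
qed

definition tblA :: "(nat list \<times> nat list) list" where
  "tblA = [
    ([0,1], [1,0])]"

definition tblB :: "(nat list \<times> nat list) list" where
  "tblB = [
    ([1,0,2,3], [2,0,1,3]),
    ([2,0,1,3], [3,0,1,2]),
    ([3,0,1,2], [0,2,1,3])]"

definition tblC :: "(nat list \<times> nat list) list" where
  "tblC = [
    ([0,2,1,3,5,4], [1,3,2,0,4,5]),
    ([0,2,1,4,5,3], [0,3,1,2,4,5]),
    ([0,3,1,2,5,4], [0,1,3,2,4,5]),
    ([0,3,1,4,5,2], [0,4,1,2,3,5]),
    ([0,3,2,4,5,1], [0,3,1,2,4,5]),
    ([0,4,1,2,5,3], [0,4,1,3,5,2]),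
    ([0,4,1,3,5,2], [0,1,3,2,4,5]),
    ([0,4,2,3,5,1], [1,4,2,0,3,5]),
    ([0,5,1,2,4,3], [0,1,3,2,4,5]),
    ([0,5,1,3,4,2], [0,1,4,2,3,5]),
    ([0,5,2,3,4,1], [0,1,3,2,4,5]),
    ([1,2,0,3,5,4], [0,3,1,2,4,5]),
    ([1,2,0,4,5,3], [0,4,1,2,3,5]),
    ([1,3,0,2,5,4], [0,4,1,3,5,2]),
    ([1,3,0,4,5,2], [0,3,1,2,4,5]),
    ([1,3,2,4,5,0], [1,3,2,0,4,5]),
    ([1,4,0,2,5,3], [0,1,3,2,4,5]),
    ([1,4,0,3,5,2], [1,4,0,2,3,5]),
    ([1,4,2,3,5,0], [0,1,3,2,4,5]),
    ([1,5,0,2,4,3], [0,1,4,2,5,3]),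
    ([1,5,0,3,4,2], [0,1,3,2,4,5]),
    ([1,5,2,3,4,0], [0,1,4,2,3,5]),
    ([2,3,0,1,5,4], [0,4,1,2,5,3]),
    ([2,3,0,4,5,1], [1,3,0,2,4,5]),
    ([2,3,1,4,5,0], [0,3,1,2,4,5]),
    ([2,4,0,1,5,3], [0,1,3,2,4,5]),
    ([2,4,0,3,5,1], [0,1,3,2,4,5]),
    ([2,4,1,3,5,0], [0,4,1,2,3,5]),
    ([2,5,0,1,4,3], [0,1,3,2,4,5]),
    ([2,5,0,3,4,1], [0,1,4,2,3,5]),
    ([2,5,1,3,4,0], [0,1,3,2,4,5]),
    ([3,4,0,1,5,2], [0,1,3,2,4,5]),
    ([3,4,0,2,5,1], [0,4,1,2,3,5]),
    ([3,4,1,2,5,0], [0,4,1,2,3,5]),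
    ([3,5,0,1,4,2], [0,1,3,2,4,5]),
    ([3,5,0,2,4,1], [0,1,3,2,4,5]),
    ([3,5,1,2,4,0], [0,1,3,2,4,5]),
    ([4,5,0,1,3,2], [0,1,4,3,5,2]),
    ([4,5,0,2,3,1], [0,1,4,2,3,5]),
    ([4,5,1,2,3,0], [0,1,3,2,4,5])]"


lemma chkA: "chk_all 2 tblA [False] [True]" by code_simp
lemma injA: "inj_all 2 tblA [False]" by code_simp
lemma chkB: "chk_all 4 tblB [True, False, False] [True, True, False]" by code_simp
lemma injB: "inj_all 4 tblB [True, False, False]" by code_simp
lemma chkC: "chk_all 6 tblC [False, True, False, False, True] [False, True, True, False, True]" by code_simp
lemma injC: "inj_all 6 tblC [False, True, False, False, True]" by code_simp

lemma domA:
  assumes TS: "T \<subseteq> {1..r}" and j: "j \<in> {1..r}" and jT: "j \<notin> T" and g: "gA T j"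
  shows "dominates r (insert j T) T"
proof (rule win_dom_checked[where s = j and w = 2 and dT = "[False]" and dS = "[True]" and tb = tblA])
  show "chk_all 2 tblA [False] [True]" by (rule chkA)
  show "inj_all 2 tblA [False]" by (rule injA)
  fix k :: nat assume "k < 2 - 1" thus "(j + k \<in> T) = [False] ! k" "(j + k \<in> insert j T) = [True] ! k"
    using jT by auto
next
  fix x assume "\<not> (j \<le> x \<and> x < j + 2 - 1)" thus "(x \<in> T) = (x \<in> insert j T)" by auto
qed (use TS j jT g in \<open>auto simp: gA_def\<close>)

lemma domB:
  assumes TS: "T \<subseteq> {1..r}" and j: "j \<in> {1..r}" and jT: "j \<notin> T" and g: "gB r T j"
  shows "dominates r (insert j T) T"
proof -
  have "j - 1 \<in> T" using g by (simp add: gB_def)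
  hence "j \<ge> 2" using TS by (cases "j = 0 \<or> j = 1") auto
  then obtain m where m: "j = m + 2" by (metis add.commute le_Suc_ex)
  have g': "m + 1 \<in> T" "m \<notin> T" "m + 3 \<notin> T" "m + 4 \<notin> T" "m + 2 < r"
    using g m by (auto simp: gB_def numeral_eq_Suc)
  show ?thesis
  proof (rule win_dom_checked[where s = "m + 1" and w = 4 and dT = "[True, False, False]"
        and dS = "[True, True, False]" and tb = tblB])
    show "chk_all 4 tblB [True, False, False] [True, True, False]" by (rule chkB)
    show "inj_all 4 tblB [True, False, False]" by (rule injB)
    fix k :: nat assume "k < 4 - 1"
    hence "k = 0 \<or> k = 1 \<or> k = 2" by arith
    thus "(m + 1 + k \<in> T) = [True, False, False] ! k" "(m + 1 + k \<in> insert j T) = [True, True, False] ! k"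
      using jT g' m by (auto simp: numeral_eq_Suc)
  next
    fix x assume "\<not> (m + 1 \<le> x \<and> x < m + 1 + 4 - 1)" thus "(x \<in> T) = (x \<in> insert j T)" using m by auto
  qed (use TS j jT g' m in \<open>auto simp: numeral_eq_Suc\<close>)
qed

lemma domC:
  assumes TS: "T \<subseteq> {1..r}" and j: "j \<in> {1..r}" and jT: "j \<notin> T" and g: "gC T j"
  shows "dominates r (insert j T) T"
proof -
  have "j \<ge> 3" using g by (simp add: gC_def)
  then obtain m where m: "j = m + 3" by (metis add.commute le_Suc_ex)
  have g': "m + 2 \<in> T" "m + 5 \<in> T" "m + 4 \<notin> T" "m + 1 \<notin> T" "m \<notin> T" "m + 6 \<notin> T"
    using g m by (auto simp: gC_def numeral_eq_Suc)
  have "m + 5 \<le> r" using g'(2) TS by auto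
  show ?thesis
  proof (rule win_dom_checked[where s = "m + 1" and w = 6 and dT = "[False, True, False, False, True]"
        and dS = "[False, True, True, False, True]" and tb = tblC])
    show "chk_all 6 tblC [False, True, False, False, True] [False, True, True, False, True]" by (rule chkC)
    show "inj_all 6 tblC [False, True, False, False, True]" by (rule injC)
    fix k :: nat assume "k < 6 - 1"
    hence "k = 0 \<or> k = 1 \<or> k = 2 \<or> k = 3 \<or> k = 4" by arith
    thus "(m + 1 + k \<in> T) = [False, True, False, False, True] ! k"
      "(m + 1 + k \<in> insert j T) = [False, True, True, False, True] ! k"
      using jT g' m by (auto simp: numeral_eq_Suc)
  next
    fix x assume "\<not> (m + 1 \<le> x \<and> x < m + 1 + 6 - 1)" thus "(x \<in> T) = (x \<in> insert j T)" using m by auto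
  qed (use TS j jT g' m \<open>m + 5 \<le> r\<close> in \<open>auto simp: numeral_eq_Suc\<close>)
qed


theorem lemma6p1:
  fixes r i :: nat and T :: "nat set"
  assumes "T \<subseteq> {1..r}" and "card T = i"
  shows "of_nat (card {S. S \<subseteq> {1..r} \<and> card S = i + 1 \<and> T \<subseteq> S \<and> dominates r S T})
           \<ge> \<lfloor>real r - 5 / 2 * real i\<rfloor>"
proof -
  note TS = assms(1)
  let ?F = "{S. S \<subseteq> {1..r} \<and> card S = i + 1 \<and> T \<subseteq> S \<and> dominates r S T}"
  have fT: "finite T" using TS finite_subset by blast
  have sub: "(\<lambda>j. insert j T) ` Good r T \<subseteq> ?F"
  proof
    fix S assume "S \<in> (\<lambda>j. insert j T) ` Good r T"
    then obtain j where j: "j \<in> Good r T" and S: "S = insert j T" by auto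
    have jr: "j \<in> {1..r}" and jT: "j \<notin> T" and g: "gA T j \<or> gB r T j \<or> gC T j"
      using j by (auto simp: Good_def)
    have "dominates r (insert j T) T"
      using g domA[OF TS jr jT] domB[OF TS jr jT] domC[OF TS jr jT] by blast
    moreover have "card (insert j T) = i + 1" using fT jT assms(2) by simp
    moreover have "insert j T \<subseteq> {1..r}" using TS jr by simp
    ultimately show "S \<in> ?F" using S by auto
  qed
  have inj: "inj_on (\<lambda>j. insert j T) (Good r T)"
  proof (rule inj_onI)
    fix a b assume a: "a \<in> Good r T" and b: "b \<in> Good r T" and e: "insert a T = insert b T"
    have "a \<notin> T" using a by (simp add: Good_def)
    moreover have "a \<in> insert b T" using e by blast
    ultimately show "a = b" by simp
  qed
  have finF: "finite ?F"
    by (rule finite_subset[of _ "Pow {1..r}"]) auto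
  have le: "card (Good r T) \<le> card ?F" using card_inj_on_le[OF inj sub finF] .
  have cnt: "2 * r \<le> 2 * card (Good r T) + 1 + 5 * card T" using count_good[OF TS] .
  hence "real (2 * r) \<le> real (2 * card (Good r T) + 1 + 5 * i)" using assms(2) by (simp only: of_nat_le_iff)
  hence "2 * real r \<le> 2 * real (card (Good r T)) + 1 + 5 * real i" by simp
  moreover have "real (card (Good r T)) \<le> real (card ?F)" using le by simp
  ultimately have "real r - 5 / 2 * real i < real (card ?F) + 1" by linarith
  hence "\<lfloor>real r - 5 / 2 * real i\<rfloor> \<le> int (card ?F)" by (simp add: floor_le_iff)
  thus ?thesis by simp
qed

end
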